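(* Let $d\ge2$, $A\in\mathbb R^{m,m}$, $f\in C^1(\mathbb R^m,\mathbb R^m)$, $S\in\mathbb R^{d,d}$ skew-symmetric, and let $U\in\mathbb C^{d,d}$ be unitary with $U^HSU=\Lambda_S=\operatorname{diag}(\lambda_1^S,\dots,\lambda_d^S)$, where $\lambda_1^S,\dots,\lambda_d^S$ are the eigenvalues of $S$. Let $v_\star\in C^3(\mathbb R^d,\mathbb R^m)$ be a classical solution of $A\Delta v_\star(x)+\langle Sx,\nabla v_\star(x)\rangle+f(v_\star(x))=0$, $x\in\mathbb R^d$. Then $v(x)=Dv_\star(x)(Ex+b)$, $x\in\mathbb R^d$, is a classical solution of $\lambda v-\mathcal Lv=0$ on $\mathbb R^d$, where $\mathcal Lv(x)=A\Delta v(x)+\langle Sx,\nabla v(x)\rangle+Df(v_\star(x))v(x)$, whenever either (i) $\lambda=-\lambda_l^S$, $E=0$, $b=Ue_l$ for some $l\in\{1,\dots,d\}$, or (ii) $\lambda=-(\lambda_i^S+\lambda_j^S)$, $E=U(I_{ij}-I_{ji})U^\top$, $b=0$ for some $1\le i<j\le d$. All these values $\lambda$ lie on the imaginary axis.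
   Context: For $x\in\mathbb R^d$, $\langle Sx,\nabla v(x)\rangle=\sum_{i,j=1}^dS_{ij}x_j\partial_{x_i}v(x)$. $e_l$ denotes the $l$-th standard unit vector of $\mathbb C^d$, and $I_{ij}=e_ie_j^\top\in\mathbb R^{d,d}$ is the matrix with entry $1$ in row $i$, column $j$ and $0$ elsewhere. $Dv_\star(x)\in\mathbb R^{m,d}$ is the Jacobian of $v_\star$ at $x$. *)

theory Defs
  imports "HOL-Analysis.Analysis"
begin

definition partial :: "('a::real_normed_vector \<Rightarrow> 'b::real_normed_vector) \<Rightarrow> 'a \<Rightarrow> 'a \<Rightarrow> 'b" where
  "partial g e x = frechet_derivative g (at x) e"

fun Ck :: "nat \<Rightarrow> ('a::euclidean_space \<Rightarrow> 'b::real_normed_vector) \<Rightarrow> bool" where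
  "Ck 0 g = continuous_on UNIV g"
| "Ck (Suc k) g = ((\<forall>x. g differentiable (at x)) \<and> continuous_on UNIV g \<and>
      (\<forall>i\<in>Basis. Ck k (partial g i)))"

definition laplacian :: "(real^'d \<Rightarrow> 'b::real_normed_vector) \<Rightarrow> real^'d \<Rightarrow> 'b" where
  "laplacian g x = (\<Sum>i\<in>UNIV. partial (partial g (axis i 1)) (axis i 1) x)"

text \<open>The drift term  <Sx, grad g(x)> = sum_{i,j} S_ij x_j d_i g(x).\<close>
definition drift :: "real^'d^'d \<Rightarrow> (real^'d \<Rightarrow> 'b::real_normed_vector) \<Rightarrow> real^'d \<Rightarrow> 'b" where
  "drift S g x = (\<Sum>i\<in>UNIV. \<Sum>j\<in>UNIV. (S$i$j * x$j) *\<^sub>R partial g (axis i 1) x)"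

definition jac :: "(real^'n \<Rightarrow> real^'m) \<Rightarrow> real^'n \<Rightarrow> real^'n^'m" where
  "jac g y = (\<chi> i j. (frechet_derivative g (at y) (axis j 1)) $ i)"

definition cmat :: "real^'n^'m \<Rightarrow> complex^'n^'m" where
  "cmat M = (\<chi> i j. complex_of_real (M$i$j))"

definition cvec :: "real^'n \<Rightarrow> complex^'n" where
  "cvec x = (\<chi> i. complex_of_real (x$i))"

definition ctranspose :: "complex^'n^'m \<Rightarrow> complex^'m^'n" where
  "ctranspose M = (\<chi> i j. cnj (M$j$i))"

definition diag :: "('n \<Rightarrow> complex) \<Rightarrow> complex^'n^'n" where
  "diag l = (\<chi> i j. if i = j then l i else 0)"

definition unitary :: "complex^'n^'n \<Rightarrow> bool" where
  "unitary U \<longleftrightarrow> ctranspose U ** U = mat 1"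

definition skew_symmetric :: "real^'n^'n \<Rightarrow> bool" where
  "skew_symmetric S \<longleftrightarrow> transpose S = - S"

definition Imat :: "'n \<Rightarrow> 'n \<Rightarrow> complex^'n^'n" where
  "Imat i j = (\<chi> k l. if k = i \<and> l = j then 1 else 0)"

definition vfun :: "(real^'d \<Rightarrow> real^'m) \<Rightarrow> complex^'d^'d \<Rightarrow> complex^'d \<Rightarrow> real^'d \<Rightarrow> complex^'m" where
  "vfun vs E b x = cmat (jac vs x) *v (E *v cvec x + b)"

definition Lop :: "real^'m^'m \<Rightarrow> real^'d^'d \<Rightarrow> (real^'m \<Rightarrow> real^'m) \<Rightarrow> (real^'d \<Rightarrow> real^'m)
     \<Rightarrow> (real^'d \<Rightarrow> complex^'m) \<Rightarrow> real^'d \<Rightarrow> complex^'m" where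
  "Lop A S f vs v x = cmat A *v laplacian v x + drift S v x + cmat (jac f (vs x)) *v v x"

definition classical_eig_solution where
  "classical_eig_solution A S f vs lam v \<longleftrightarrow>
     Ck 2 v \<and> (\<forall>x. lam *s v x - Lop A S f vs v x = 0)"

end

theory Submission
  imports Defs
begin

lemma partial_at: "(g has_derivative D) (at x) \<Longrightarrow> partial g e x = D e"
  unfolding partial_def using frechet_derivative_at by metis

lemma line_deriv:
  fixes g :: "'a::real_normed_vector \<Rightarrow> real^'m"
  assumes "\<And>y. g differentiable (at y)"
  shows "((\<lambda>s. g (p + s *\<^sub>R u) $ i) has_real_derivative (partial g u (p + s *\<^sub>R u) $ i)) (at s)"
proof -
  have D: "(g has_derivative frechet_derivative g (at (p + s *\<^sub>R u))) (at (p + s *\<^sub>R u))"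
    using assms frechet_derivative_works by blast
  have L: "((\<lambda>s. p + s *\<^sub>R u) has_derivative (\<lambda>h. h *\<^sub>R u)) (at s)"
    by (auto intro!: derivative_eq_intros)
  have "((\<lambda>s. g (p + s *\<^sub>R u)) has_derivative (\<lambda>h. frechet_derivative g (at (p + s *\<^sub>R u)) (h *\<^sub>R u))) (at s)"
    using has_derivative_compose[OF L D] by (simp add: o_def)
  then have "((\<lambda>s. g (p + s *\<^sub>R u) $ i) has_derivative (\<lambda>h. frechet_derivative g (at (p + s *\<^sub>R u)) (h *\<^sub>R u) $ i)) (at s)"
    using bounded_linear.has_derivative[OF bounded_linear_vec_nth] by blast
  moreover have "linear (frechet_derivative g (at (p + s *\<^sub>R u)))"
    using D has_derivative_linear by blast
  ultimately show ?thesis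
    unfolding has_field_derivative_def partial_def
    by (simp add: linear_scale mult.commute[of _ "frechet_derivative g (at (p + s *\<^sub>R u)) u $ i"])
qed

lemma schwarz_half:
  fixes g :: "'a::real_normed_vector \<Rightarrow> real^'m"
  assumes dg: "\<And>y. g differentiable (at y)" and da: "\<And>y. partial g u differentiable (at y)"
    and h: "h > 0"
  shows "\<exists>\<sigma> \<tau>. 0 < \<sigma> \<and> \<sigma> < h \<and> 0 < \<tau> \<and> \<tau> < h \<and>
     g (x + h *\<^sub>R u + h *\<^sub>R w) $ i - g (x + h *\<^sub>R u) $ i - g (x + h *\<^sub>R w) $ i + g x $ i
       = h^2 * partial (partial g u) w (x + \<sigma> *\<^sub>R u + \<tau> *\<^sub>R w) $ i"
proof -
  define \<phi> where "\<phi> s = g ((x + h *\<^sub>R w) + s *\<^sub>R u) $ i - g (x + s *\<^sub>R u) $ i" for s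
  have d1: "DERIV \<phi> s :> (partial g u ((x + h *\<^sub>R w) + s *\<^sub>R u) $ i - partial g u (x + s *\<^sub>R u) $ i)" for s
    unfolding \<phi>_def by (intro DERIV_diff line_deriv dg)
  then obtain \<sigma> where s: "0 < \<sigma>" "\<sigma> < h"
    and e1: "\<phi> h - \<phi> 0 = (h - 0) * (partial g u ((x + h *\<^sub>R w) + \<sigma> *\<^sub>R u) $ i - partial g u (x + \<sigma> *\<^sub>R u) $ i)"
    using MVT2[OF h, of \<phi> "\<lambda>s. partial g u ((x + h *\<^sub>R w) + s *\<^sub>R u) $ i - partial g u (x + s *\<^sub>R u) $ i"] d1 by blast
  define \<psi> where "\<psi> t = partial g u ((x + \<sigma> *\<^sub>R u) + t *\<^sub>R w) $ i" for t
  have d2: "DERIV \<psi> t :> partial (partial g u) w ((x + \<sigma> *\<^sub>R u) + t *\<^sub>R w) $ i" for t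
    unfolding \<psi>_def by (intro line_deriv da)
  then obtain \<tau> where t: "0 < \<tau>" "\<tau> < h"
    and e2: "\<psi> h - \<psi> 0 = (h - 0) * partial (partial g u) w ((x + \<sigma> *\<^sub>R u) + \<tau> *\<^sub>R w) $ i"
    using MVT2[OF h, of \<psi> "\<lambda>t. partial (partial g u) w ((x + \<sigma> *\<^sub>R u) + t *\<^sub>R w) $ i"] d2 by blast
  have eq: "x + h *\<^sub>R w + \<sigma> *\<^sub>R u = x + \<sigma> *\<^sub>R u + h *\<^sub>R w" by (simp add: algebra_simps)
  have "\<phi> h - \<phi> 0 = h * (\<psi> h - \<psi> 0)" using e1 unfolding \<psi>_def by (simp only: eq) simp
  also have "\<dots> = h^2 * partial (partial g u) w ((x + \<sigma> *\<^sub>R u) + \<tau> *\<^sub>R w) $ i"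
    using e2 by (simp add: power2_eq_square)
  finally have "\<phi> h - \<phi> 0 = h^2 * partial (partial g u) w ((x + \<sigma> *\<^sub>R u) + \<tau> *\<^sub>R w) $ i" .
  moreover have "\<phi> h - \<phi> 0 = g (x + h *\<^sub>R u + h *\<^sub>R w) $ i - g (x + h *\<^sub>R u) $ i - g (x + h *\<^sub>R w) $ i + g x $ i"
    unfolding \<phi>_def by (simp add: algebra_simps)
  ultimately show ?thesis using s t by metis
qed

lemma cont_comp_eps:
  fixes F :: "'a::real_normed_vector \<Rightarrow> real^'m"
  assumes "continuous_on UNIV F" "e > 0"
  shows "\<exists>d>0. \<forall>y. norm (y - x) < d \<longrightarrow> \<bar>F y $ i - F x $ i\<bar> < e"
proof -
  have "isCont F x" using assms(1) continuous_on_eq_continuous_at by blast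
  then have "isCont (\<lambda>y. F y $ i) x" by simp
  then obtain d where d: "d > 0" "\<forall>y. y \<noteq> x \<and> norm (y - x) < d \<longrightarrow> norm (F y $ i - F x $ i) < e"
    unfolding isCont_def LIM_eq using assms(2) by blast
  show ?thesis
    apply (rule exI[of _ d]) using d assms(2) by (metis abs_zero cancel_comm_monoid_add_class.diff_cancel real_norm_def)
qed

lemma schwarz:
  fixes g :: "'a::real_normed_vector \<Rightarrow> real^'m"
  assumes dg: "\<And>y. g differentiable (at y)" and du: "\<And>y. partial g u differentiable (at y)"
    and dw: "\<And>y. partial g w differentiable (at y)"
    and c1: "continuous_on UNIV (partial (partial g u) w)"
    and c2: "continuous_on UNIV (partial (partial g w) u)"
  shows "partial (partial g u) w x = partial (partial g w) u x"
proof (rule vec_eq_iff[THEN iffD2], rule allI, rule ccontr)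
  fix i
  let ?C1 = "\<lambda>y. partial (partial g u) w y $ i"
  let ?C2 = "\<lambda>y. partial (partial g w) u y $ i"
  assume ne: "?C1 x \<noteq> ?C2 x"
  define e where "e = \<bar>?C1 x - ?C2 x\<bar> / 2"
  have e: "e > 0" using ne unfolding e_def by simp
  obtain d1 where d1: "d1 > 0" "\<forall>y. norm (y - x) < d1 \<longrightarrow> \<bar>?C1 y - ?C1 x\<bar> < e"
    using cont_comp_eps[OF c1 e] by blast
  obtain d2 where d2: "d2 > 0" "\<forall>y. norm (y - x) < d2 \<longrightarrow> \<bar>?C2 y - ?C2 x\<bar> < e"
    using cont_comp_eps[OF c2 e] by blast
  define d where "d = min d1 d2"
  have d: "d > 0" using d1 d2 unfolding d_def by simp
  define h where "h = d / (norm u + norm w + 1)"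
  have hpos: "h > 0" unfolding h_def using d by (simp add: add_nonneg_pos)
  have hd: "h * (norm u + norm w) < d"
  proof -
    have "norm u + norm w + 1 > 0" using norm_ge_zero[of u] norm_ge_zero[of w] by linarith
    then have "h * (norm u + norm w + 1) = d" unfolding h_def by simp
    then show ?thesis using hpos by (simp add: algebra_simps)
  qed
  have close: "norm ((x + a *\<^sub>R p + b *\<^sub>R q) - x) < d"
    if "0 < a" "a < h" "0 < b" "b < h" "norm p + norm q = norm u + norm w" for a b p q
  proof -
    have "norm ((x + a *\<^sub>R p + b *\<^sub>R q) - x) \<le> a * norm p + b * norm q"
      using that by (simp add: norm_triangle_le)
    also have "\<dots> \<le> h * norm p + h * norm q"
      using that by (intro add_mono mult_right_mono) auto
    also have "\<dots> = h * (norm p + norm q)" by (simp add: algebra_simps)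
    also have "\<dots> < d" using hd that by simp
    finally show ?thesis .
  qed
  obtain s1 t1 where st1: "0 < s1" "s1 < h" "0 < t1" "t1 < h"
    "g (x + h *\<^sub>R u + h *\<^sub>R w) $ i - g (x + h *\<^sub>R u) $ i - g (x + h *\<^sub>R w) $ i + g x $ i
       = h^2 * ?C1 (x + s1 *\<^sub>R u + t1 *\<^sub>R w)"
    using schwarz_half[OF dg du hpos] by blast
  obtain s2 t2 where st2: "0 < s2" "s2 < h" "0 < t2" "t2 < h"
    "g (x + h *\<^sub>R w + h *\<^sub>R u) $ i - g (x + h *\<^sub>R w) $ i - g (x + h *\<^sub>R u) $ i + g x $ i
       = h^2 * ?C2 (x + s2 *\<^sub>R w + t2 *\<^sub>R u)"
    using schwarz_half[OF dg dw hpos] by blast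
  have "x + h *\<^sub>R w + h *\<^sub>R u = x + h *\<^sub>R u + h *\<^sub>R w" by (simp add: algebra_simps)
  then have "h^2 * ?C1 (x + s1 *\<^sub>R u + t1 *\<^sub>R w) = h^2 * ?C2 (x + s2 *\<^sub>R w + t2 *\<^sub>R u)"
    using st1(5) st2(5) by (simp add: algebra_simps)
  then have eq: "?C1 (x + s1 *\<^sub>R u + t1 *\<^sub>R w) = ?C2 (x + s2 *\<^sub>R w + t2 *\<^sub>R u)"
    using hpos by simp
  have a1: "\<bar>?C1 (x + s1 *\<^sub>R u + t1 *\<^sub>R w) - ?C1 x\<bar> < e"
    using d1(2) close[OF st1(1-4), of u w] unfolding d_def by simp
  have a2: "\<bar>?C2 (x + s2 *\<^sub>R w + t2 *\<^sub>R u) - ?C2 x\<bar> < e"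
    using d2(2) close[OF st2(1-4), of w u] unfolding d_def by (simp add: add.commute)
  have "\<bar>?C1 x - ?C2 x\<bar> < 2 * e" using a1 a2 eq by linarith
  then show False unfolding e_def by simp
qed

lemma bl_axis: "bounded_linear (axis i :: 'a::real_normed_vector \<Rightarrow> 'a^'n)"
proof (rule bounded_linear_intro[where K=1])
  show "axis i (x + y) = axis i x + axis i y" for x y :: 'a by (simp add: vec_eq_iff axis_def)
  show "axis i (r *\<^sub>R x) = r *\<^sub>R axis i x" for r x by (simp add: vec_eq_iff axis_def)
  show "norm (axis i x) \<le> norm x * 1" for x
  proof -
    have "norm (axis i x) \<le> (\<Sum>j\<in>UNIV. norm (axis i x $ j))"
      unfolding norm_vec_def by (rule L2_set_le_sum) simp
    also have "\<dots> = norm x" by (simp add: axis_def if_distrib cong: if_cong)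
    finally show ?thesis by simp
  qed
qed

lemma vec_sum_axis: "(\<Sum>i\<in>UNIV. axis i (z $ i)) = (z::'a::comm_monoid_add^'n)"
  by (simp add: vec_eq_iff axis_def sum_component if_distrib sum.delta cong: if_cong)

lemma vec_deriv:
  fixes g :: "'a::real_normed_vector \<Rightarrow> 'b::real_normed_vector^'n"
  assumes "\<And>i. ((\<lambda>y. g y $ i) has_derivative D i) (at x)"
  shows "(g has_derivative (\<lambda>h. \<chi> i. D i h)) (at x)"
proof -
  have "((\<lambda>y. \<Sum>i\<in>UNIV. axis i (g y $ i)) has_derivative (\<lambda>h. \<Sum>i\<in>UNIV. axis i (D i h))) (at x)"
    by (intro has_derivative_sum bounded_linear.has_derivative[OF bl_axis] assms)
  moreover have "(\<lambda>h. \<Sum>i\<in>UNIV. axis i (D i h)) = (\<lambda>h. \<chi> i. D i h)"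
    using vec_sum_axis[of "\<chi> i. D i _"] by (simp add: fun_eq_iff)
  ultimately show ?thesis by (simp add: vec_sum_axis)
qed

lemma comp_deriv:
  "(g has_derivative D) F \<Longrightarrow> ((\<lambda>y. g y $ i) has_derivative (\<lambda>h. D h $ i)) F"
  by (rule bounded_linear.has_derivative[OF bounded_linear_vec_nth])

lemma lin_expand:
  fixes L :: "real^'n \<Rightarrow> 'b::real_vector"
  assumes "linear L"
  shows "L z = (\<Sum>r\<in>UNIV. z $ r *\<^sub>R L (axis r 1))"
proof -
  have "L z = L (\<Sum>r\<in>UNIV. z $ r *\<^sub>R axis r 1)"
    using basis_expansion[of z] by (simp add: scalar_mult_eq_scaleR)
  also have "\<dots> = (\<Sum>r\<in>UNIV. z $ r *\<^sub>R L (axis r 1))"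
    using assms by (simp add: linear_sum linear_scale)
  finally show ?thesis .
qed

lemma vs_deriv_pde:
  fixes vs :: "real^'d \<Rightarrow> real^'m" and A :: "real^'m^'m" and S :: "real^'d^'d" and f :: "real^'m \<Rightarrow> real^'m"
  assumes dvs: "\<And>y. vs differentiable (at y)"
    and dP1: "\<And>j y. partial vs (axis j 1) differentiable (at y)"
    and dP2: "\<And>j k y. partial (partial vs (axis j 1)) (axis k 1) differentiable (at y)"
    and df: "\<And>z. f differentiable (at z)"
    and sol: "\<forall>x. A *v laplacian vs x + drift S vs x + f (vs x) = 0"
  shows "A *v (\<Sum>k\<in>UNIV. partial (partial (partial vs (axis k 1)) (axis k 1)) (axis j 1) y)
         + (\<Sum>k\<in>UNIV. S$k$j *\<^sub>R partial vs (axis k 1) y)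
         + (\<Sum>k\<in>UNIV. \<Sum>l\<in>UNIV. (S$k$l * y$l) *\<^sub>R partial (partial vs (axis k 1)) (axis j 1) y)
         + frechet_derivative f (at (vs y)) (partial vs (axis j 1) y) = 0"
proof -
  let ?P1 = "\<lambda>k. partial vs (axis k 1)"
  let ?P2 = "\<lambda>k. partial (partial vs (axis k 1)) (axis k 1)"
  let ?G = "\<lambda>x. A *v laplacian vs x + drift S vs x + f (vs x)"
  have lap: "laplacian vs = (\<lambda>x. \<Sum>k\<in>UNIV. ?P2 k x)"
    by (simp add: laplacian_def fun_eq_iff)
  have dr: "drift S vs = (\<lambda>x. \<Sum>k\<in>UNIV. \<Sum>l\<in>UNIV. (S$k$l * x$l) *\<^sub>R ?P1 k x)"
    by (simp add: drift_def fun_eq_iff)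
  have W: "\<And>g x. g differentiable (at x) \<Longrightarrow> (g has_derivative frechet_derivative g (at x)) (at x)"
    using frechet_derivative_works by blast
  have d1: "((\<lambda>x. A *v laplacian vs x) has_derivative
      (\<lambda>h. A *v (\<Sum>k\<in>UNIV. frechet_derivative (?P2 k) (at y) h))) (at y)"
    unfolding lap
    by (intro bounded_linear.has_derivative[OF matrix_vector_mul_bounded_linear] has_derivative_sum W dP2)
  have nth: "((\<lambda>x. S$k$l * x$l) has_derivative (\<lambda>h. S$k$l * h$l)) (at y)" for k l
    by (intro has_derivative_mult_right bounded_linear.has_derivative[OF bounded_linear_vec_nth] has_derivative_ident)
  have d2: "(drift S vs has_derivative
      (\<lambda>h. \<Sum>k\<in>UNIV. \<Sum>l\<in>UNIV. (S$k$l * y$l) *\<^sub>R frechet_derivative (?P1 k) (at y) h + (S$k$l * h$l) *\<^sub>R ?P1 k y)) (at y)"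
    unfolding dr
    by (intro has_derivative_sum has_derivative_scaleR nth W dP1)
  have d3: "((\<lambda>x. f (vs x)) has_derivative (\<lambda>h. frechet_derivative f (at (vs y)) (frechet_derivative vs (at y) h))) (at y)"
    using has_derivative_compose[OF W[OF dvs] W[OF df]] by (simp add: o_def)
  have dG: "(?G has_derivative (\<lambda>h. A *v (\<Sum>k\<in>UNIV. frechet_derivative (?P2 k) (at y) h) +
      (\<Sum>k\<in>UNIV. \<Sum>l\<in>UNIV. (S$k$l * y$l) *\<^sub>R frechet_derivative (?P1 k) (at y) h + (S$k$l * h$l) *\<^sub>R ?P1 k y) +
      frechet_derivative f (at (vs y)) (frechet_derivative vs (at y) h))) (at y)"
    by (intro has_derivative_add d1 d2 d3)
  have "?G = (\<lambda>x. 0)" using sol by (simp add: fun_eq_iff)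
  then have dG0: "(?G has_derivative (\<lambda>h. 0)) (at y)" by simp
  from has_derivative_unique[OF dG dG0]
  have "A *v (\<Sum>k\<in>UNIV. frechet_derivative (?P2 k) (at y) (axis j 1)) +
      (\<Sum>k\<in>UNIV. \<Sum>l\<in>UNIV. (S$k$l * y$l) *\<^sub>R frechet_derivative (?P1 k) (at y) (axis j 1) + (S$k$l * axis j 1 $l) *\<^sub>R ?P1 k y) +
      frechet_derivative f (at (vs y)) (frechet_derivative vs (at y) (axis j 1)) = 0"
    by (simp add: fun_eq_iff)
  moreover have "(\<Sum>l\<in>UNIV. (S$k$l * axis j 1 $l) *\<^sub>R ?P1 k y) = S$k$j *\<^sub>R ?P1 k y" for k
  proof -
    have ax: "\<And>l. axis j (1::real) $ l = (if l = j then 1 else 0)" by (simp add: axis_def)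
    have "(\<Sum>l\<in>UNIV. (S$k$l * axis j 1 $l) *\<^sub>R ?P1 k y) = (\<Sum>l\<in>UNIV. if l = j then S$k$j *\<^sub>R ?P1 k y else 0)"
      by (rule sum.cong) (simp_all only: ax, simp)
    then show ?thesis by simp
  qed
  ultimately show ?thesis
    by (simp add: sum.distrib partial_def add_ac)
qed

lemma sw1: fixes f :: "'a::finite \<Rightarrow> 'c::comm_ring_1" and g :: "'a \<Rightarrow> 'b::finite \<Rightarrow> 'c"
  shows "(\<Sum>r\<in>UNIV. f r * (\<Sum>j\<in>UNIV. g r j)) = (\<Sum>j\<in>UNIV. \<Sum>r\<in>UNIV. f r * g r j)"
  by (simp add: sum_distrib_left) (rule sum.swap)

lemma alg_T1: fixes A :: "'m::finite \<Rightarrow> real" and w :: "'d::finite \<Rightarrow> complex" and p3 :: "'d \<Rightarrow> 'd \<Rightarrow> 'm \<Rightarrow> real"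
  shows "(\<Sum>r\<in>UNIV. of_real (A r) * (\<Sum>j\<in>UNIV. w j * of_real (\<Sum>k\<in>UNIV. p3 j k r)))
     = (\<Sum>j\<in>UNIV. w j * of_real (\<Sum>r\<in>UNIV. A r * (\<Sum>k\<in>UNIV. p3 j k r)))"
  unfolding sw1 by (simp add: sum_distrib_left mult_ac) (rule sum.cong[OF refl], rule sum.swap)

lemma alg_DRa: fixes S :: "'d::finite \<Rightarrow> 'd \<Rightarrow> real" and E :: "'d \<Rightarrow> 'd \<Rightarrow> complex" and p1 :: "'d \<Rightarrow> real"
  shows "(\<Sum>k\<in>UNIV. \<Sum>l\<in>UNIV. of_real (S k l * x l) * (\<Sum>j\<in>UNIV. of_real (p1 j) * E j k))
      = (\<Sum>j\<in>UNIV. of_real (p1 j) * (\<Sum>k\<in>UNIV. E j k * (\<Sum>l\<in>UNIV. of_real (S k l * x l))))"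
proof -
  have "(\<Sum>k\<in>UNIV. \<Sum>l\<in>UNIV. of_real (S k l * x l) * (\<Sum>j\<in>UNIV. of_real (p1 j) * E j k))
     = (\<Sum>k\<in>UNIV. (\<Sum>l\<in>UNIV. of_real (S k l * x l)) * (\<Sum>j\<in>UNIV. of_real (p1 j) * E j k))"
    by (simp add: sum_distrib_right)
  also have "\<dots> = (\<Sum>k\<in>UNIV. \<Sum>j\<in>UNIV. (\<Sum>l\<in>UNIV. of_real (S k l * x l)) * (of_real (p1 j) * E j k))"
    by (simp add: sum_distrib_left)
  also have "\<dots> = (\<Sum>j\<in>UNIV. \<Sum>k\<in>UNIV. (\<Sum>l\<in>UNIV. of_real (S k l * x l)) * (of_real (p1 j) * E j k))"
    by (rule sum.swap)
  also have "\<dots> = (\<Sum>j\<in>UNIV. of_real (p1 j) * (\<Sum>k\<in>UNIV. E j k * (\<Sum>l\<in>UNIV. of_real (S k l * x l))))"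
    by (simp add: sum_distrib_left mult_ac del: of_real_mult of_real_sum)
  finally show ?thesis .
qed

lemma alg_DRb: fixes S :: "'d::finite \<Rightarrow> 'd \<Rightarrow> real" and w :: "'d \<Rightarrow> complex" and p2 :: "'d \<Rightarrow> 'd \<Rightarrow> real"
  assumes sym2: "\<And>j k. p2 j k = p2 k j"
  shows "(\<Sum>k\<in>UNIV. \<Sum>l\<in>UNIV. of_real (S k l * x l) * (\<Sum>j\<in>UNIV. of_real (p2 j k) * w j))
      = (\<Sum>j\<in>UNIV. w j * of_real (\<Sum>k\<in>UNIV. \<Sum>l\<in>UNIV. S k l * x l * p2 k j))"
proof -
  have "(\<Sum>k\<in>UNIV. \<Sum>l\<in>UNIV. of_real (S k l * x l) * (\<Sum>j\<in>UNIV. of_real (p2 j k) * w j))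
     = (\<Sum>k\<in>UNIV. \<Sum>j\<in>UNIV. (\<Sum>l\<in>UNIV. of_real (S k l * x l)) * (of_real (p2 j k) * w j))"
    by (simp add: sum_distrib_right sum_distrib_left del: of_real_mult of_real_sum) (rule sum.cong[OF refl], rule sum.swap)
  also have "\<dots> = (\<Sum>j\<in>UNIV. \<Sum>k\<in>UNIV. (\<Sum>l\<in>UNIV. of_real (S k l * x l)) * (of_real (p2 j k) * w j))"
    by (rule sum.swap)
  also have "\<dots> = (\<Sum>j\<in>UNIV. w j * of_real (\<Sum>k\<in>UNIV. \<Sum>l\<in>UNIV. S k l * x l * p2 k j))"
    by (simp add: sum_distrib_left sum_distrib_right mult_ac sym2[of _ "_::'d"])
  finally show ?thesis .
qed

lemma alg_Q: fixes S :: "'d::finite \<Rightarrow> 'd \<Rightarrow> real" and w :: "'d \<Rightarrow> complex" and p1 :: "'d \<Rightarrow> real"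
  shows "(\<Sum>j\<in>UNIV. w j * of_real (- (\<Sum>k\<in>UNIV. S k j * p1 k)))
      = - (\<Sum>j\<in>UNIV. of_real (p1 j) * (\<Sum>m\<in>UNIV. of_real (S j m) * w m))"
proof -
  have "(\<Sum>j\<in>UNIV. w j * of_real (- (\<Sum>k\<in>UNIV. S k j * p1 k))) = - (\<Sum>j\<in>UNIV. \<Sum>k\<in>UNIV. w j * (of_real (S k j) * of_real (p1 k)))"
    by (simp add: sum_distrib_left sum_negf)
  also have "\<dots> = - (\<Sum>k\<in>UNIV. \<Sum>j\<in>UNIV. w j * (of_real (S k j) * of_real (p1 k)))"
    by (subst sum.swap) (rule refl)
  also have "\<dots> = - (\<Sum>j\<in>UNIV. of_real (p1 j) * (\<Sum>m\<in>UNIV. of_real (S j m) * w m))"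
    by (simp add: sum_distrib_left mult_ac)
  finally show ?thesis .
qed

lemma alg_C1: fixes S :: "'d::finite \<Rightarrow> 'd \<Rightarrow> real" and E :: "'d \<Rightarrow> 'd \<Rightarrow> complex"
  shows "(\<Sum>k\<in>UNIV. E j k * (\<Sum>l\<in>UNIV. of_real (S k l * x l)))
        = (\<Sum>l\<in>UNIV. of_real (x l) * (\<Sum>k\<in>UNIV. E j k * of_real (S k l)))"
proof -
  have "(\<Sum>k\<in>UNIV. E j k * (\<Sum>l\<in>UNIV. of_real (S k l * x l))) = (\<Sum>k\<in>UNIV. \<Sum>l\<in>UNIV. of_real (x l) * (E j k * of_real (S k l)))"
    by (simp add: sum_distrib_left mult_ac)
  also have "\<dots> = (\<Sum>l\<in>UNIV. \<Sum>k\<in>UNIV. of_real (x l) * (E j k * of_real (S k l)))"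
    by (rule sum.swap)
  also have "\<dots> = (\<Sum>l\<in>UNIV. of_real (x l) * (\<Sum>k\<in>UNIV. E j k * of_real (S k l)))"
    by (simp add: sum_distrib_left)
  finally show ?thesis .
qed

lemma alg_C2: fixes S :: "'d::finite \<Rightarrow> 'd \<Rightarrow> real" and E :: "'d \<Rightarrow> 'd \<Rightarrow> complex" and w :: "'d \<Rightarrow> complex"
  assumes w: "\<And>j. w j = (\<Sum>k\<in>UNIV. E j k * of_real (x k)) + b j"
  shows "(\<Sum>m\<in>UNIV. of_real (S j m) * w m)
        = (\<Sum>l\<in>UNIV. of_real (x l) * (\<Sum>k\<in>UNIV. of_real (S j k) * E k l)) + (\<Sum>k\<in>UNIV. of_real (S j k) * b k)"
proof -
  have "(\<Sum>m\<in>UNIV. of_real (S j m) * w m) = (\<Sum>m\<in>UNIV. \<Sum>l\<in>UNIV. of_real (x l) * (of_real (S j m) * E m l)) + (\<Sum>k\<in>UNIV. of_real (S j k) * b k)"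
    by (simp add: w distrib_left sum.distrib sum_distrib_left mult_ac)
  also have "(\<Sum>m\<in>UNIV. \<Sum>l\<in>UNIV. of_real (x l) * (of_real (S j m) * E m l)) = (\<Sum>l\<in>UNIV. \<Sum>m\<in>UNIV. of_real (x l) * (of_real (S j m) * E m l))"
    by (rule sum.swap)
  finally show ?thesis by (simp add: sum_distrib_left)
qed


lemma lin4: fixes a b c d q y :: "'a::ab_group_add"
  assumes "a + b + c = q" "q = - y" shows "a + (d + b) + c = d - y"
proof -
  have "a + (d + b) + c = d + (a + b + c)" by (simp add: ac_simps)
  then show ?thesis using assms by simp
qed

lemma final_alg:
  fixes A :: "'m::finite \<Rightarrow> 'm \<Rightarrow> real" and J :: "'m \<Rightarrow> 'm \<Rightarrow> real" and S :: "'d::finite \<Rightarrow> 'd \<Rightarrow> real"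
    and x :: "'d \<Rightarrow> real" and E :: "'d \<Rightarrow> 'd \<Rightarrow> complex" and b :: "'d \<Rightarrow> complex" and lam :: complex
    and pa :: "'d \<Rightarrow> 'm \<Rightarrow> real" and pb :: "'d \<Rightarrow> 'd \<Rightarrow> 'm \<Rightarrow> real" and pc :: "'d \<Rightarrow> 'd \<Rightarrow> 'm \<Rightarrow> real"
    and w :: "'d \<Rightarrow> complex"
  assumes w: "\<And>j. w j = (\<Sum>k\<in>UNIV. E j k * of_real (x k)) + b j"
   and sym2: "\<And>j k r. pb j k r = pb k j r"
   and pde: "\<And>j i. (\<Sum>r\<in>UNIV. A i r * (\<Sum>k\<in>UNIV. pc j k r)) + (\<Sum>k\<in>UNIV. S k j * pa k i)
         + (\<Sum>k\<in>UNIV. \<Sum>l\<in>UNIV. S k l * x l * pb k j i) + (\<Sum>r\<in>UNIV. J i r * pa j r) = 0"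
   and hE: "\<And>j l. (\<Sum>k\<in>UNIV. E j k * of_real (S k l)) - (\<Sum>k\<in>UNIV. of_real (S j k) * E k l) = lam * E j l"
   and hb: "\<And>j. (\<Sum>k\<in>UNIV. of_real (S j k) * b k) = - lam * b j"
   and sk: "\<And>j k. E j k = - E k j"
  shows "lam * (\<Sum>j\<in>UNIV. of_real (pa j i) * w j) =
     (\<Sum>r\<in>UNIV. of_real (A i r) * (\<Sum>k\<in>UNIV. \<Sum>j\<in>UNIV. of_real (pb j k r) * E j k + of_real (pb j k r) * E j k + of_real (pc j k r) * w j))
   + (\<Sum>k\<in>UNIV. \<Sum>l\<in>UNIV. of_real (S k l * x l) * (\<Sum>j\<in>UNIV. of_real (pa j i) * E j k + of_real (pb j k i) * w j))
   + (\<Sum>r\<in>UNIV. of_real (J i r) * (\<Sum>j\<in>UNIV. of_real (pa j r) * w j))"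
proof -
  have Z: "(\<Sum>k\<in>UNIV. \<Sum>j\<in>UNIV. of_real (pb j k r) * E j k) = (0::complex)" for r
  proof -
    let ?X = "(\<Sum>k\<in>UNIV. \<Sum>j\<in>UNIV. of_real (pb j k r) * E j k) :: complex"
    have "?X = (\<Sum>j\<in>UNIV. \<Sum>k\<in>UNIV. of_real (pb j k r) * E j k)" by (rule sum.swap)
    also have "\<dots> = (\<Sum>j\<in>UNIV. \<Sum>k\<in>UNIV. - (of_real (pb k j r) * E k j))"
      by (intro sum.cong refl) (metis sym2 sk mult_minus_right)
    also have "\<dots> = - ?X" by (simp add: sum_negf)
    finally show ?thesis by simp
  qed
  have LAP: "(\<Sum>k\<in>UNIV. \<Sum>j\<in>UNIV. of_real (pb j k r) * E j k + of_real (pb j k r) * E j k + of_real (pc j k r) * w j)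
      = (\<Sum>j\<in>UNIV. w j * of_real (\<Sum>k\<in>UNIV. pc j k r))" for r
  proof -
    have "(\<Sum>k\<in>UNIV. \<Sum>j\<in>UNIV. of_real (pb j k r) * E j k + of_real (pb j k r) * E j k + of_real (pc j k r) * w j)
       = 2 * (\<Sum>k\<in>UNIV. \<Sum>j\<in>UNIV. of_real (pb j k r) * E j k) + (\<Sum>k\<in>UNIV. \<Sum>j\<in>UNIV. of_real (pc j k r) * w j)"
      by (simp add: sum.distrib sum_distrib_left mult_ac)
    also have "\<dots> = (\<Sum>j\<in>UNIV. \<Sum>k\<in>UNIV. of_real (pc j k r) * w j)" using Z[of r] sum.swap by simp
    also have "\<dots> = (\<Sum>j\<in>UNIV. w j * of_real (\<Sum>k\<in>UNIV. pc j k r))"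
      by (simp add: sum_distrib_left mult.commute)
    finally show ?thesis .
  qed
  have T1: "(\<Sum>r\<in>UNIV. of_real (A i r) * (\<Sum>j\<in>UNIV. w j * of_real (\<Sum>k\<in>UNIV. pc j k r)))
     = (\<Sum>j\<in>UNIV. w j * of_real (\<Sum>r\<in>UNIV. A i r * (\<Sum>k\<in>UNIV. pc j k r)))"
    by (rule alg_T1)
  have DR: "(\<Sum>k\<in>UNIV. \<Sum>l\<in>UNIV. of_real (S k l * x l) * (\<Sum>j\<in>UNIV. of_real (pa j i) * E j k + of_real (pb j k i) * w j))
     = (\<Sum>j\<in>UNIV. of_real (pa j i) * (\<Sum>k\<in>UNIV. E j k * (\<Sum>l\<in>UNIV. of_real (S k l * x l))))
       + (\<Sum>j\<in>UNIV. w j * of_real (\<Sum>k\<in>UNIV. \<Sum>l\<in>UNIV. S k l * x l * pb k j i))"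
  proof -
    have a: "(\<Sum>k\<in>UNIV. \<Sum>l\<in>UNIV. of_real (S k l * x l) * (\<Sum>j\<in>UNIV. of_real (pa j i) * E j k))
      = (\<Sum>j\<in>UNIV. of_real (pa j i) * (\<Sum>k\<in>UNIV. E j k * (\<Sum>l\<in>UNIV. of_real (S k l * x l))))"
      by (rule alg_DRa)
    have b: "(\<Sum>k\<in>UNIV. \<Sum>l\<in>UNIV. of_real (S k l * x l) * (\<Sum>j\<in>UNIV. of_real (pb j k i) * w j))
      = (\<Sum>j\<in>UNIV. w j * of_real (\<Sum>k\<in>UNIV. \<Sum>l\<in>UNIV. S k l * x l * pb k j i))"
      by (rule alg_DRb, rule sym2)
    show ?thesis using a b by (simp add: distrib_left sum.distrib)
  qed
  have T3: "(\<Sum>r\<in>UNIV. of_real (J i r) * (\<Sum>j\<in>UNIV. of_real (pa j r) * w j))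
     = (\<Sum>j\<in>UNIV. w j * of_real (\<Sum>r\<in>UNIV. J i r * pa j r))"
    unfolding sw1 by (simp add: sum_distrib_left mult_ac)
  have P: "(\<Sum>j\<in>UNIV. w j * of_real (\<Sum>r\<in>UNIV. A i r * (\<Sum>k\<in>UNIV. pc j k r)))
      + (\<Sum>j\<in>UNIV. w j * of_real (\<Sum>k\<in>UNIV. \<Sum>l\<in>UNIV. S k l * x l * pb k j i))
      + (\<Sum>j\<in>UNIV. w j * of_real (\<Sum>r\<in>UNIV. J i r * pa j r))
      = (\<Sum>j\<in>UNIV. w j * of_real (- (\<Sum>k\<in>UNIV. S k j * pa k i)))"
  proof -
    have h: "(\<Sum>r\<in>UNIV. A i r * (\<Sum>k\<in>UNIV. pc j k r)) + (\<Sum>k\<in>UNIV. \<Sum>l\<in>UNIV. S k l * x l * pb k j i)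
       + (\<Sum>r\<in>UNIV. J i r * pa j r) = - (\<Sum>k\<in>UNIV. S k j * pa k i)" for j
      using pde[where j=j and i=i] by linarith
    have e: "w j * of_real (\<Sum>r\<in>UNIV. A i r * (\<Sum>k\<in>UNIV. pc j k r)) + w j * of_real (\<Sum>k\<in>UNIV. \<Sum>l\<in>UNIV. S k l * x l * pb k j i)
       + w j * of_real (\<Sum>r\<in>UNIV. J i r * pa j r) = w j * of_real (- (\<Sum>k\<in>UNIV. S k j * pa k i))" for j
      by (simp only: distrib_left[symmetric] of_real_add[symmetric] h)
    show ?thesis
      by (simp only: sum.distrib[symmetric] e)
  qed
  have Q: "(\<Sum>j\<in>UNIV. w j * of_real (- (\<Sum>k\<in>UNIV. S k j * pa k i)))
      = - (\<Sum>j\<in>UNIV. of_real (pa j i) * (\<Sum>m\<in>UNIV. of_real (S j m) * w m))"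
    by (rule alg_Q)
  have coef: "(\<Sum>k\<in>UNIV. E j k * (\<Sum>l\<in>UNIV. of_real (S k l * x l))) - (\<Sum>m\<in>UNIV. of_real (S j m) * w m)
      = lam * w j" for j
  proof -
    have "(\<Sum>k\<in>UNIV. E j k * (\<Sum>l\<in>UNIV. of_real (S k l * x l)))
        = (\<Sum>l\<in>UNIV. of_real (x l) * (\<Sum>k\<in>UNIV. E j k * of_real (S k l)))"
      by (rule alg_C1)
    moreover have "(\<Sum>m\<in>UNIV. of_real (S j m) * w m)
        = (\<Sum>l\<in>UNIV. of_real (x l) * (\<Sum>k\<in>UNIV. of_real (S j k) * E k l)) + (\<Sum>k\<in>UNIV. of_real (S j k) * b k)"
      by (rule alg_C2, rule w)
    ultimately have "(\<Sum>k\<in>UNIV. E j k * (\<Sum>l\<in>UNIV. of_real (S k l * x l))) - (\<Sum>m\<in>UNIV. of_real (S j m) * w m)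
       = (\<Sum>l\<in>UNIV. of_real (x l) * ((\<Sum>k\<in>UNIV. E j k * of_real (S k l)) - (\<Sum>k\<in>UNIV. of_real (S j k) * E k l)))
         - (\<Sum>k\<in>UNIV. of_real (S j k) * b k)"
      by (simp add: right_diff_distrib sum_subtractf)
    also have "\<dots> = (\<Sum>l\<in>UNIV. of_real (x l) * (lam * E j l)) + lam * b j"
      by (simp add: hE hb)
    also have "\<dots> = lam * w j"
      by (simp add: w distrib_left sum_distrib_left mult_ac)
    finally show ?thesis .
  qed
  have "(\<Sum>r\<in>UNIV. of_real (A i r) * (\<Sum>k\<in>UNIV. \<Sum>j\<in>UNIV. of_real (pb j k r) * E j k + of_real (pb j k r) * E j k + of_real (pc j k r) * w j))
   + (\<Sum>k\<in>UNIV. \<Sum>l\<in>UNIV. of_real (S k l * x l) * (\<Sum>j\<in>UNIV. of_real (pa j i) * E j k + of_real (pb j k i) * w j))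
   + (\<Sum>r\<in>UNIV. of_real (J i r) * (\<Sum>j\<in>UNIV. of_real (pa j r) * w j))
   = (\<Sum>j\<in>UNIV. of_real (pa j i) * (\<Sum>k\<in>UNIV. E j k * (\<Sum>l\<in>UNIV. of_real (S k l * x l))))
     - (\<Sum>j\<in>UNIV. of_real (pa j i) * (\<Sum>m\<in>UNIV. of_real (S j m) * w m))"
    unfolding LAP T1 DR T3 by (rule lin4[OF P Q])
  also have "\<dots> = (\<Sum>j\<in>UNIV. of_real (pa j i) * (lam * w j))"
    by (subst sum_subtractf[symmetric], rule sum.cong[OF refl], simp only: right_diff_distrib[symmetric] coef)
  also have "\<dots> = lam * (\<Sum>j\<in>UNIV. of_real (pa j i) * w j)"
    by (simp add: sum_distrib_left mult_ac)
  finally show ?thesis by simp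
qed

definition Fv :: "(real^'d \<Rightarrow> real^'m) \<Rightarrow> ('d \<Rightarrow> complex) \<Rightarrow> complex \<Rightarrow> real^'d \<Rightarrow> complex^'m" where
  "Fv p c c0 y = (\<chi> i. complex_of_real (p y $ i) * ((\<Sum>k\<in>UNIV. c k * complex_of_real (y $ k)) + c0))"

lemma vec_deriv2:
  fixes g :: "'a::real_normed_vector \<Rightarrow> 'b::real_normed_vector^'n"
  shows "(\<And>i. ((\<lambda>y. g y $ i) has_derivative (\<lambda>h. D h $ i)) (at x)) \<Longrightarrow> (g has_derivative D) (at x)"
  using vec_deriv[of g "\<lambda>i h. D h $ i"] by (simp add: vec_lambda_eta)

lemma Fv_deriv:
  fixes p :: "real^'d \<Rightarrow> real^'m"
  assumes "p differentiable (at y)"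
  shows "(Fv p c c0 has_derivative (\<lambda>h. \<chi> i. complex_of_real (p y $ i) * (\<Sum>k\<in>UNIV. c k * complex_of_real (h $ k))
      + complex_of_real (frechet_derivative p (at y) h $ i) * ((\<Sum>k\<in>UNIV. c k * complex_of_real (y $ k)) + c0))) (at y)"
proof -
  have dp: "(p has_derivative frechet_derivative p (at y)) (at y)"
    using assms frechet_derivative_works by blast
  have d1: "((\<lambda>x. complex_of_real (p x $ i)) has_derivative (\<lambda>h. complex_of_real (frechet_derivative p (at y) h $ i))) (at y)" for i
    by (intro bounded_linear.has_derivative[OF bounded_linear_of_real] comp_deriv dp)
  have dx: "((\<lambda>x. complex_of_real (x $ k)) has_derivative (\<lambda>h. complex_of_real (h $ k))) (at y)" for k
    by (intro bounded_linear.has_derivative[OF bounded_linear_of_real] bounded_linear.has_derivative[OF bounded_linear_vec_nth] has_derivative_ident)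
  have d2: "((\<lambda>x. (\<Sum>k\<in>UNIV. c k * complex_of_real (x $ k)) + c0) has_derivative (\<lambda>h. \<Sum>k\<in>UNIV. c k * complex_of_real (h $ k))) (at y)"
    by (intro has_derivative_add_const has_derivative_sum has_derivative_mult_right dx)
  show ?thesis unfolding Fv_def
    by (rule vec_deriv2) (simp, rule has_derivative_mult[OF d1 d2])
qed

lemma Fv_diff: "p differentiable (at y) \<Longrightarrow> Fv p c c0 differentiable (at y)"
  using Fv_deriv differentiable_def by blast

lemma Fv_partial:
  assumes "p differentiable (at y)"
  shows "partial (Fv p c c0) (axis l 1) y = Fv p (\<lambda>_. 0) (c l) y + Fv (partial p (axis l 1)) c c0 y"
proof -
  have s: "(\<Sum>k\<in>UNIV. c k * complex_of_real (axis l 1 $ k)) = c l"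
    by (simp add: axis_def if_distrib cong: if_cong)
  show ?thesis
    unfolding partial_at[OF Fv_deriv[OF assms]]
    by (simp add: vec_eq_iff Fv_def s partial_def)
qed

lemma Fv_cont: "continuous_on UNIV p \<Longrightarrow> continuous_on UNIV (Fv p c c0)"
  unfolding Fv_def[abs_def]
  by (intro continuous_intros continuous_on_component)

lemma partial_sum:
  assumes "\<And>j. j \<in> J \<Longrightarrow> g j differentiable (at y)" "finite J"
  shows "partial (\<lambda>x. \<Sum>j\<in>J. g j x) e y = (\<Sum>j\<in>J. partial (g j) e y)"
proof -
  have "((\<lambda>x. \<Sum>j\<in>J. g j x) has_derivative (\<lambda>h. \<Sum>j\<in>J. frechet_derivative (g j) (at y) h)) (at y)"
    using assms by (intro has_derivative_sum) (auto intro: frechet_derivative_works[THEN iffD1])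
  from partial_at[OF this, of e] show ?thesis by (simp add: partial_def)
qed

lemma partial_add:
  assumes "g1 differentiable (at y)" "g2 differentiable (at y)"
  shows "partial (\<lambda>x. g1 x + g2 x) e y = partial g1 e y + partial g2 e y"
proof -
  have "((\<lambda>x. g1 x + g2 x) has_derivative (\<lambda>h. frechet_derivative g1 (at y) h + frechet_derivative g2 (at y) h)) (at y)"
    using assms by (intro has_derivative_add) (auto intro: frechet_derivative_works[THEN iffD1])
  from partial_at[OF this, of e] show ?thesis by (simp add: partial_def)
qed

lemma basis_axis: "e \<in> (Basis :: (real^'d) set) \<Longrightarrow> \<exists>k. e = axis k 1"
  by (auto simp: Basis_vec_def)

lemma Fv_zero: "Fv p (\<lambda>_. 0) 0 = (\<lambda>y. 0)"
  by (simp add: fun_eq_iff vec_eq_iff Fv_def)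

lemma main_lemma:
  fixes A :: "real^'m^'m" and f :: "real^'m \<Rightarrow> real^'m" and S :: "real^'d^'d"
    and vs :: "real^'d \<Rightarrow> real^'m" and E :: "complex^'d^'d" and b :: "complex^'d" and lam :: complex
  assumes f_C1: "Ck 1 f"
    and vs_C3: "Ck 3 vs"
    and vs_sol: "\<forall>x. A *v laplacian vs x + drift S vs x + f (vs x) = 0"
    and hE: "\<And>j l. (\<Sum>k\<in>UNIV. E$j$k * of_real (S$k$l)) - (\<Sum>k\<in>UNIV. of_real (S$j$k) * E$k$l) = lam * E$j$l"
    and hb: "\<And>j. (\<Sum>k\<in>UNIV. of_real (S$j$k) * b$k) = - lam * b$j"
    and sk: "\<And>j k. E$j$k = - E$k$j"
  shows "classical_eig_solution A S f vs lam (vfun vs E b)"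
proof -
  define P1 where "P1 j = partial vs (axis j 1)" for j
  define P2 where "P2 j k = partial (P1 j) (axis k 1)" for j k
  define P3 where "P3 j k l = partial (P2 j k) (axis l 1)" for j k l
  have ax: "axis j (1::real) \<in> Basis" for j :: 'd by simp
  have C3: "Ck (Suc (Suc (Suc 0))) vs" using vs_C3 by (simp add: numeral_3_eq_3)
  have dvs: "\<And>y. vs differentiable (at y)" using C3 by simp
  have dP1: "\<And>j y. P1 j differentiable (at y)" using C3 ax unfolding P1_def by simp
  have cP1: "\<And>j. continuous_on UNIV (P1 j)" using C3 ax unfolding P1_def by simp
  have dP2: "\<And>j k y. P2 j k differentiable (at y)" using C3 ax unfolding P1_def P2_def by simp
  have cP2: "\<And>j k. continuous_on UNIV (P2 j k)" using C3 ax unfolding P1_def P2_def by simp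
  have cP3: "\<And>j k l. continuous_on UNIV (P3 j k l)" using C3 ax unfolding P1_def P2_def P3_def by simp
  have df: "\<And>z. f differentiable (at z)" using f_C1 by simp
  have sym2: "P2 j k y = P2 k j y" for j k y
    unfolding P2_def P1_def
    by (rule schwarz[OF dvs]) (use dP1 cP2 in \<open>auto simp: P1_def P2_def\<close>)
  have sym2f: "P2 j k = P2 k j" for j k using sym2 by auto
  have sym3: "P3 k k j y = P3 j k k y" for j k y
  proof -
    have "P3 k k j y = partial (P2 k j) (axis k 1) y"
      unfolding P3_def P2_def
      by (rule schwarz[OF dP1]) (use dP2 cP3 in \<open>auto simp: P2_def P3_def\<close>)
    then show ?thesis unfolding P3_def sym2f[of k j] .
  qed
  let ?W = "\<lambda>j. \<lambda>k. E$j$k"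
  let ?v = "vfun vs E b"
  have vrep: "?v = (\<lambda>y. \<Sum>j\<in>UNIV. Fv (P1 j) (?W j) (b$j) y)"
    by (simp add: fun_eq_iff vec_eq_iff vfun_def cmat_def jac_def cvec_def matrix_vector_mult_def Fv_def
        P1_def partial_def mult.commute)
  have dF1: "\<And>j c c0 y. Fv (P1 j) c c0 differentiable (at y)" by (rule Fv_diff[OF dP1])
  have dF2: "\<And>j k c c0 y. Fv (P2 j k) c c0 differentiable (at y)" by (rule Fv_diff[OF dP2])
  define V1 where "V1 k y = (\<Sum>j\<in>UNIV. Fv (P1 j) (\<lambda>_. 0) (E$j$k) y + Fv (P2 j k) (?W j) (b$j) y)" for k y
  have V1: "partial ?v (axis k 1) = V1 k" for k
  proof
    fix y
    show "partial ?v (axis k 1) y = V1 k y"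
      unfolding vrep V1_def
      by (simp add: partial_sum dF1 Fv_partial dP1 P2_def)
  qed
  have dV1: "V1 k differentiable (at y)" for k y
    unfolding V1_def by (auto intro!: differentiable_sum differentiable_add dF1 dF2)
  define V2 where "V2 k l y = (\<Sum>j\<in>UNIV. Fv (P2 j l) (\<lambda>_. 0) (E$j$k) y + (Fv (P2 j k) (\<lambda>_. 0) (E$j$l) y + Fv (P3 j k l) (?W j) (b$j) y))" for k l y
  have V2: "partial (V1 k) (axis l 1) y = V2 k l y" for k l y
    unfolding V1_def V2_def
    by (simp add: partial_sum partial_add dF1 dF2 Fv_partial dP1 dP2 P2_def[symmetric] P3_def[symmetric] Fv_zero)
  have cV1: "continuous_on UNIV (V1 k)" for k
    unfolding V1_def[abs_def] by (intro continuous_on_sum continuous_on_add Fv_cont cP1 cP2)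
  have cV2: "continuous_on UNIV (V2 k l)" for k l
    unfolding V2_def[abs_def] by (intro continuous_on_sum continuous_on_add Fv_cont cP2 cP3)
  have dv: "?v differentiable (at y)" for y
    unfolding vrep by (auto intro!: differentiable_sum dF1)
  have C2: "Ck 2 ?v"
  proof -
    have "continuous_on UNIV ?v"
      using dv by (simp add: differentiable_imp_continuous_on differentiable_on_def differentiable_at_withinI)
    moreover have "Ck 1 (partial ?v e)" if eB: "e \<in> Basis" for e
    proof -
      obtain k where k: "e = axis k 1" using basis_axis[OF eB] by blast
      have "continuous_on UNIV (partial (V1 k) e')" if eB': "e' \<in> Basis" for e'
      proof -
        obtain l where "e' = axis l 1" using basis_axis[OF eB'] by blast
        then have "partial (V1 k) e' = V2 k l" using V2 by auto
        then show ?thesis using cV2 by simp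
      qed
      then show ?thesis using k V1 dV1 cV1 by simp
    qed
    ultimately show ?thesis using dv by (simp add: numeral_2_eq_2)
  qed
  have eqn: "lam *s ?v x - Lop A S f vs ?v x = 0" for x
  proof -
    define w where "w j = (\<Sum>k\<in>UNIV. E$j$k * of_real (x$k)) + b$j" for j
    have linf: "linear (frechet_derivative f (at (vs x)))"
      using df frechet_derivative_works has_derivative_linear by blast
    have pde: "(\<Sum>r\<in>UNIV. A$i$r * (\<Sum>k\<in>UNIV. P3 j k k x $ r)) + (\<Sum>k\<in>UNIV. S$k$j * P1 k x $ i)
         + (\<Sum>k\<in>UNIV. \<Sum>l\<in>UNIV. S$k$l * x$l * P2 k j x $ i) + (\<Sum>r\<in>UNIV. jac f (vs x) $ i $ r * P1 j x $ r) = 0"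
      for j i
    proof -
      have V: "A *v (\<Sum>k\<in>UNIV. P3 k k j x) + (\<Sum>k\<in>UNIV. S$k$j *\<^sub>R P1 k x)
         + (\<Sum>k\<in>UNIV. \<Sum>l\<in>UNIV. (S$k$l * x$l) *\<^sub>R P2 k j x)
         + frechet_derivative f (at (vs x)) (P1 j x) = 0"
        using vs_deriv_pde[OF dvs _ _ df vs_sol, of j x] dP1 dP2 unfolding P1_def P2_def P3_def by blast
      have s3: "(\<Sum>k\<in>UNIV. P3 k k j x) = (\<Sum>k\<in>UNIV. P3 j k k x)"
        by (rule sum.cong[OF refl]) (rule sym3)
      have fd: "frechet_derivative f (at (vs x)) (P1 j x) $ i = (\<Sum>r\<in>UNIV. jac f (vs x) $ i $ r * P1 j x $ r)"
        by (subst lin_expand[OF linf]) (simp add: jac_def sum_component mult.commute)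
      have "(A *v (\<Sum>k\<in>UNIV. P3 k k j x) + (\<Sum>k\<in>UNIV. S$k$j *\<^sub>R P1 k x)
         + (\<Sum>k\<in>UNIV. \<Sum>l\<in>UNIV. (S$k$l * x$l) *\<^sub>R P2 k j x)
         + frechet_derivative f (at (vs x)) (P1 j x)) $ i = 0" using V by simp
      then have "(A *v (\<Sum>k\<in>UNIV. P3 j k k x) + (\<Sum>k\<in>UNIV. S$k$j *\<^sub>R P1 k x)
         + (\<Sum>k\<in>UNIV. \<Sum>l\<in>UNIV. (S$k$l * x$l) *\<^sub>R P2 k j x)
         + frechet_derivative f (at (vs x)) (P1 j x)) $ i = 0" by (simp only: s3)
      then show ?thesis
        by (simp add: fd matrix_vector_mult_def sum_component)
    qed
    have FA: "lam * (\<Sum>j\<in>UNIV. of_real (P1 j x $ i) * w j) =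
     (\<Sum>r\<in>UNIV. of_real (A$i$r) * (\<Sum>k\<in>UNIV. \<Sum>j\<in>UNIV. of_real (P2 j k x $ r) * E$j$k + of_real (P2 j k x $ r) * E$j$k + of_real (P3 j k k x $ r) * w j))
   + (\<Sum>k\<in>UNIV. \<Sum>l\<in>UNIV. of_real (S$k$l * x$l) * (\<Sum>j\<in>UNIV. of_real (P1 j x $ i) * E$j$k + of_real (P2 j k x $ i) * w j))
   + (\<Sum>r\<in>UNIV. of_real (jac f (vs x) $ i $ r) * (\<Sum>j\<in>UNIV. of_real (P1 j x $ r) * w j))" for i
      by (rule final_alg[where pa="\<lambda>j r. P1 j x $ r" and pb="\<lambda>j k r. P2 j k x $ r" and pc="\<lambda>j k r. P3 j k k x $ r"
            and A="\<lambda>i r. A$i$r" and J="\<lambda>i r. jac f (vs x) $ i $ r" and S="\<lambda>k l. S$k$l" and x="\<lambda>l. x$l"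
            and E="\<lambda>j k. E$j$k" and b="\<lambda>j. b$j"])
         (simp add: w_def, metis sym2, rule pde, rule hE, rule hb, rule sk)
    have lap: "laplacian ?v x = (\<Sum>k\<in>UNIV. V2 k k x)" by (simp add: laplacian_def V1 V2)
    have dri: "drift S ?v x = (\<Sum>k\<in>UNIV. \<Sum>l\<in>UNIV. (S$k$l * x$l) *\<^sub>R V1 k x)" by (simp add: drift_def V1)
    have vx: "?v x $ i = (\<Sum>j\<in>UNIV. of_real (P1 j x $ i) * w j)" for i
      by (simp add: vrep Fv_def w_def sum_component)
    have c1: "(cmat A *v laplacian ?v x) $ i = (\<Sum>r\<in>UNIV. of_real (A$i$r) * (\<Sum>k\<in>UNIV. \<Sum>j\<in>UNIV. of_real (P2 j k x $ r) * E$j$k + of_real (P2 j k x $ r) * E$j$k + of_real (P3 j k k x $ r) * w j))" for i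
      by (simp add: lap V2_def Fv_def w_def cmat_def matrix_vector_mult_def sum_component add.assoc mult_ac)
    have c2: "drift S ?v x $ i = (\<Sum>k\<in>UNIV. \<Sum>l\<in>UNIV. of_real (S$k$l * x$l) * (\<Sum>j\<in>UNIV. of_real (P1 j x $ i) * E$j$k + of_real (P2 j k x $ i) * w j))" for i
      by (simp add: dri V1_def Fv_def w_def sum_component) (simp add: scaleR_conv_of_real)
    have c3: "(cmat (jac f (vs x)) *v ?v x) $ i = (\<Sum>r\<in>UNIV. of_real (jac f (vs x) $ i $ r) * (\<Sum>j\<in>UNIV. of_real (P1 j x $ r) * w j))" for i
      by (simp add: vx cmat_def matrix_vector_mult_def)
    show ?thesis
    proof (rule vec_eq_iff[THEN iffD2], rule allI)
      fix i
      have "Lop A S f vs ?v x $ i = lam * ?v x $ i"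
        unfolding Lop_def using FA[of i] by (simp add: c1 c2 c3 vx)
      then show "(lam *s ?v x - Lop A S f vs ?v x) $ i = 0 $ i" by simp
    qed
  qed
  show ?thesis unfolding classical_eig_solution_def using C2 eqn by blast
qed

lemma SU_comp:
  fixes S :: "real^'d^'d" and U :: "complex^'d^'d"
  assumes U_unitary: "unitary U" and U_diag: "ctranspose U ** cmat S ** U = diag lamS"
  shows "(\<Sum>k\<in>UNIV. of_real (S$a$k) * U$k$l) = lamS l * U$a$l"
proof -
  have UU: "U ** ctranspose U = mat 1"
    using U_unitary unfolding unitary_def by (simp add: matrix_left_right_inverse)
  have "cmat S ** U = (U ** ctranspose U) ** cmat S ** U" by (simp add: UU matrix_mul_lid)
  also have "\<dots> = U ** (ctranspose U ** cmat S ** U)" by (simp add: matrix_mul_assoc)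
  also have "\<dots> = U ** diag lamS" by (simp add: U_diag)
  finally have "(cmat S ** U) $ a $ l = (U ** diag lamS) $ a $ l" by simp
  then show ?thesis
    by (simp add: matrix_matrix_mult_def cmat_def diag_def if_distrib mult.commute cong: if_cong)
qed

lemma E_comp:
  fixes U :: "complex^'d^'d"
  shows "(U ** (Imat i j - Imat j i) ** transpose U) $ a $ c = U$a$i * U$c$j - U$a$j * U$c$i"
proof -
  have a: "(\<Sum>m\<in>UNIV. U$a$m * (if m = p \<and> n = q then 1 else 0)) = (if n = q then U$a$p else 0)" for p q n
    by (cases "n = q") (simp_all add: if_distrib cong: if_cong)
  have X: "(U ** (Imat i j - Imat j i)) $ a $ n = (if n = j then U$a$i else 0) - (if n = i then U$a$j else 0)" for n
  proof -
    have "(U ** (Imat i j - Imat j i)) $ a $ n = (\<Sum>m\<in>UNIV. U$a$m * (if m = i \<and> n = j then 1 else 0))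
        - (\<Sum>m\<in>UNIV. U$a$m * (if m = j \<and> n = i then 1 else 0))"
      by (simp add: matrix_matrix_mult_def Imat_def right_diff_distrib sum_subtractf)
    then show ?thesis by (simp only: a)
  qed
  have b: "(\<Sum>n\<in>UNIV. (if n = q then z else 0) * U$c$n) = z * U$c$q" for q z
  proof -
    have "\<And>n. (if n = q then z else 0) * U$c$n = (if n = q then z * U$c$q else 0)" by auto
    then show ?thesis by simp
  qed
  have "(U ** (Imat i j - Imat j i) ** transpose U) $ a $ c
      = (\<Sum>n\<in>UNIV. (if n = j then U$a$i else 0) * U$c$n) - (\<Sum>n\<in>UNIV. (if n = i then U$a$j else 0) * U$c$n)"
  proof -
    have o: "(M ** transpose U) $ a $ c = (\<Sum>n\<in>UNIV. M$a$n * U$c$n)" for M :: "complex^'d^'d"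
      by (simp add: matrix_matrix_mult_def transpose_def)
    show ?thesis unfolding o X by (simp add: left_diff_distrib sum_subtractf)
  qed
  then show ?thesis by (simp only: b)
qed

lemma lam_imag:
  fixes S :: "real^'d^'d" and U :: "complex^'d^'d"
  assumes S_skew: "skew_symmetric S" and U_diag: "ctranspose U ** cmat S ** U = diag lamS"
  shows "cnj (lamS l) = - lamS l"
proof -
  have sk: "S$b$a = - S$a$b" for a b
  proof -
    have "(transpose S)$a$b = (-S)$a$b" using S_skew unfolding skew_symmetric_def by simp
    then show ?thesis by (simp add: transpose_def)
  qed
  define T where "T a b = cnj (U$a$l) * of_real (S$a$b) * U$b$l" for a b
  have L: "lamS l = (\<Sum>a\<in>UNIV. \<Sum>b\<in>UNIV. T a b)"
  proof -
    have "lamS l = (ctranspose U ** cmat S ** U) $ l $ l" by (simp add: U_diag diag_def)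
    also have "\<dots> = (\<Sum>b\<in>UNIV. (\<Sum>a\<in>UNIV. cnj (U$a$l) * of_real (S$a$b)) * U$b$l)"
      by (simp add: matrix_matrix_mult_def ctranspose_def cmat_def)
    also have "\<dots> = (\<Sum>b\<in>UNIV. \<Sum>a\<in>UNIV. T a b)"
      by (simp add: sum_distrib_right T_def)
    also have "\<dots> = (\<Sum>a\<in>UNIV. \<Sum>b\<in>UNIV. T a b)"
      by (rule sum.swap)
    finally show ?thesis .
  qed
  have cT: "cnj (T a b) = - T b a" for a b
    unfolding T_def by (simp add: sk[of a b] mult_ac)
  have "cnj (lamS l) = (\<Sum>a\<in>UNIV. \<Sum>b\<in>UNIV. - T b a)"
    unfolding L by (simp only: cnj_sum cT)
  also have "\<dots> = - (\<Sum>b\<in>UNIV. \<Sum>a\<in>UNIV. T b a)"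
    by (subst sum.swap) (simp add: sum_negf)
  also have "\<dots> = - lamS l" unfolding L ..
  finally show ?thesis .
qed

theorem theorem2p3:
  fixes A :: "real^'m^'m" and f :: "real^'m \<Rightarrow> real^'m"
    and S :: "real^('d::{finite,linorder})^('d::{finite,linorder})" and U :: "complex^('d::{finite,linorder})^('d::{finite,linorder})"
    and lamS :: "('d::{finite,linorder}) \<Rightarrow> complex"
    and vs :: "real^('d::{finite,linorder}) \<Rightarrow> real^'m"
  assumes d2: "CARD(('d::{finite,linorder})) \<ge> 2"
    and f_C1: "Ck 1 f"
    and S_skew: "skew_symmetric S"
    and U_unitary: "unitary U"
    and U_diag: "ctranspose U ** cmat S ** U = diag lamS"
    and vs_C3: "Ck 3 vs"
    and vs_sol: "\<forall>x. A *v laplacian vs x + drift S vs x + f (vs x) = 0"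
  shows "(\<forall>l. classical_eig_solution A S f vs (- lamS l) (vfun vs 0 (U *v axis l 1))
              \<and> Re (- lamS l) = 0)
       \<and> (\<forall>i j. i < j \<longrightarrow>
            classical_eig_solution A S f vs (- (lamS i + lamS j))
               (vfun vs (U ** (Imat i j - Imat j i) ** transpose U) 0)
            \<and> Re (- (lamS i + lamS j)) = 0)"
proof -
  have SU: "\<And>a l. (\<Sum>k\<in>UNIV. of_real (S$a$k) * U$k$l) = lamS l * U$a$l"
    using SU_comp[OF U_unitary U_diag] by blast
  have skS: "S$b$a = - S$a$b" for a b
  proof -
    have "(transpose S)$a$b = (-S)$a$b" using S_skew unfolding skew_symmetric_def by simp
    then show ?thesis by (simp add: transpose_def)
  qed
  have re: "Re (lamS l) = 0" for l
  proof -
    have "Re (cnj (lamS l)) = Re (- lamS l)" by (simp only: lam_imag[OF S_skew U_diag])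
    then show ?thesis by simp
  qed
  have SUt: "(\<Sum>k\<in>UNIV. of_real (S$k$c) * U$k$m) = - lamS m * U$c$m" for c m
  proof -
    have "(\<Sum>k\<in>UNIV. of_real (S$k$c) * U$k$m) = (\<Sum>k\<in>UNIV. - (of_real (S$c$k) * U$k$m))"
      by (intro sum.cong refl) (subst skS, simp)
    also have "\<dots> = - lamS m * U$c$m" by (simp add: sum_negf SU)
    finally show ?thesis .
  qed
  have part1: "classical_eig_solution A S f vs (- lamS l) (vfun vs 0 (U *v axis l 1))" for l
  proof (rule main_lemma[OF f_C1 vs_C3 vs_sol])
    have col: "(U *v axis l 1) $ k = U$k$l" for k
    proof -
      have "\<And>m. U$k$m * axis l 1 $ m = (if m = l then U$k$l else 0)" by (simp add: axis_def)
      then show ?thesis by (simp add: matrix_vector_mult_def)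
    qed
    show "\<And>j. (\<Sum>k\<in>UNIV. of_real (S$j$k) * (U *v axis l 1)$k) = - (- lamS l) * (U *v axis l 1)$j"
      by (simp add: col SU)
  qed simp_all
  have part2: "classical_eig_solution A S f vs (- (lamS i + lamS j))
               (vfun vs (U ** (Imat i j - Imat j i) ** transpose U) 0)" for i j
  proof (rule main_lemma[OF f_C1 vs_C3 vs_sol])
    show "\<And>a c. (U ** (Imat i j - Imat j i) ** transpose U) $ a $ c = - (U ** (Imat i j - Imat j i) ** transpose U) $ c $ a"
      by (simp add: E_comp)
    show "\<And>a c. (\<Sum>k\<in>UNIV. (U ** (Imat i j - Imat j i) ** transpose U)$a$k * of_real (S$k$c))
        - (\<Sum>k\<in>UNIV. of_real (S$a$k) * (U ** (Imat i j - Imat j i) ** transpose U)$k$c)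
        = - (lamS i + lamS j) * (U ** (Imat i j - Imat j i) ** transpose U)$a$c"
    proof -
      fix a c
      have h1: "(\<Sum>k\<in>UNIV. (U$a$i * U$k$j - U$a$j * U$k$i) * of_real (S$k$c))
         = U$a$i * (\<Sum>k\<in>UNIV. of_real (S$k$c) * U$k$j) - U$a$j * (\<Sum>k\<in>UNIV. of_real (S$k$c) * U$k$i)"
      proof -
        have "(\<Sum>k\<in>UNIV. (U$a$i * U$k$j - U$a$j * U$k$i) * of_real (S$k$c))
          = (\<Sum>k\<in>UNIV. U$a$i * (of_real (S$k$c) * U$k$j) - U$a$j * (of_real (S$k$c) * U$k$i))"
          by (rule sum.cong) (simp_all add: algebra_simps)
        then show ?thesis by (simp add: sum_subtractf sum_distrib_left)
      qed
      have h3: "(\<Sum>k\<in>UNIV. of_real (S$a$k) * (U$k$i * U$c$j - U$k$j * U$c$i))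
         = (\<Sum>k\<in>UNIV. of_real (S$a$k) * U$k$i) * U$c$j - (\<Sum>k\<in>UNIV. of_real (S$a$k) * U$k$j) * U$c$i"
      proof -
        have "(\<Sum>k\<in>UNIV. of_real (S$a$k) * (U$k$i * U$c$j - U$k$j * U$c$i))
          = (\<Sum>k\<in>UNIV. (of_real (S$a$k) * U$k$i) * U$c$j - (of_real (S$a$k) * U$k$j) * U$c$i)"
          by (rule sum.cong) (simp_all add: algebra_simps)
        then show ?thesis by (simp only: sum_subtractf sum_distrib_right)
      qed
      show "?thesis a c"
        unfolding E_comp h1 h3 SUt SU by (simp add: algebra_simps)
    qed
  qed simp_all
  show ?thesis using part1 part2 re by simp
qed

end
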